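(* Let $R$ be a commutative ring and $S$ a finite multiplicative subset of $R$. The following are equivalent: (1) $R$ is a $u$-$S$-coherent ring; (2) $R$ is an $S$-coherent ring; (3) $R$ is a $c$-$S$-coherent ring.
   Context: A multiplicative subset $S$ contains $1$ and is closed under products. $M$ is $S$-finite if there are $s\in S$ and a finitely generated submodule $F\subseteq M$ with $sM\subseteq F$ (with respect to $s$). $M$ is $u$-$S$-finitely presented with respect to $s$ if there is an exact sequence $0\to T_1\to F\to M\to T_2\to 0$ with $F$ finitely presented and $sT_1=sT_2=0$. $R$ is $u$-$S$-coherent if there is $s\in S$ such that $R$ is $S$-finite with respect to $s$ and every finitely generated ideal is $u$-$S$-finitely presented with respect to $s$. $M$ is $S$-finitely presented if there is an exact sequence $0\to K\to F\to M\to 0$ with $F$ finitely generated free and $K$ $S$-finite; $M$ is $c$-$S$-finitely presented if there are $s\in S$ and a finitely presented submodule $N\subseteq M$ with $sM\subseteq N$. $R$ is $S$-coherent (resp. $c$-$S$-coherent) if every finitely generated ideal of $R$ is $S$-finitely presented (resp. $c$-$S$-finitely presented). *)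

theory Defs
  imports Main
begin

text \<open>Setting: R is the commutative ring given by the type 'a (class comm_ring_1, R = UNIV).
  Modules occurring in the definitions are either ideals of R (subsets of 'a) or
  submodules of the finitely generated free module R^n, represented as functions
  nat \<Rightarrow> 'a vanishing from index n on.\<close>

definition mult_subset :: "'a::comm_ring_1 set \<Rightarrow> bool" where
  "mult_subset S \<longleftrightarrow> 1 \<in> S \<and> (\<forall>s\<in>S. \<forall>t\<in>S. s * t \<in> S)"

definition is_ideal :: "'a::comm_ring_1 set \<Rightarrow> bool" where
  "is_ideal I \<longleftrightarrow> 0 \<in> I \<and> (\<forall>x\<in>I. \<forall>y\<in>I. x + y \<in> I) \<and> (\<forall>r. \<forall>x\<in>I. r * x \<in> I)"

definition ideal_gen :: "'a::comm_ring_1 set \<Rightarrow> 'a set" where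
  "ideal_gen A = {x. \<exists>c. x = (\<Sum>a\<in>A. c a * a)}"

definition fg_ideal :: "'a::comm_ring_1 set \<Rightarrow> bool" where
  "fg_ideal I \<longleftrightarrow> (\<exists>A. finite A \<and> A \<subseteq> I \<and> I = ideal_gen A)"

definition freemod :: "nat \<Rightarrow> (nat \<Rightarrow> 'a::comm_ring_1) set" where
  "freemod n = {x. \<forall>i\<ge>n. x i = 0}"

definition smult_vec :: "'a::comm_ring_1 \<Rightarrow> (nat \<Rightarrow> 'a) \<Rightarrow> (nat \<Rightarrow> 'a)" where
  "smult_vec r x = (\<lambda>i. r * x i)"

definition lin_span :: "(nat \<Rightarrow> 'a::comm_ring_1) set \<Rightarrow> (nat \<Rightarrow> 'a) set" where
  "lin_span G = {x. \<exists>c. \<forall>i. x i = (\<Sum>g\<in>G. c g * g i)}"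

definition submod :: "nat \<Rightarrow> (nat \<Rightarrow> 'a::comm_ring_1) set \<Rightarrow> bool" where
  "submod n K \<longleftrightarrow> K \<subseteq> freemod n \<and> (\<lambda>i. 0) \<in> K \<and>
     (\<forall>x\<in>K. \<forall>y\<in>K. (\<lambda>i. x i + y i) \<in> K) \<and> (\<forall>r. \<forall>x\<in>K. smult_vec r x \<in> K)"

definition fg_submod :: "(nat \<Rightarrow> 'a::comm_ring_1) set \<Rightarrow> bool" where
  "fg_submod K \<longleftrightarrow> (\<exists>G. finite G \<and> G \<subseteq> K \<and> K = lin_span G)"

definition S_finite_wrt :: "'a::comm_ring_1 \<Rightarrow> (nat \<Rightarrow> 'a) set \<Rightarrow> bool" where
  "S_finite_wrt s K \<longleftrightarrow> (\<exists>G. finite G \<and> G \<subseteq> K \<and> (\<forall>x\<in>K. smult_vec s x \<in> lin_span G))"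

definition ring_S_finite_wrt :: "'a::comm_ring_1 \<Rightarrow> bool" where
  "ring_S_finite_wrt s \<longleftrightarrow> (\<exists>A. finite A \<and> (\<forall>r::'a. s * r \<in> ideal_gen A))"

definition lmap :: "nat \<Rightarrow> (nat \<Rightarrow> 'a::comm_ring_1) \<Rightarrow> (nat \<Rightarrow> 'a) \<Rightarrow> 'a" where
  "lmap n a x = (\<Sum>i<n. x i * a i)"

definition lker :: "nat \<Rightarrow> (nat \<Rightarrow> 'a::comm_ring_1) \<Rightarrow> (nat \<Rightarrow> 'a) set" where
  "lker n a = {x \<in> freemod n. lmap n a x = 0}"

definition S_fp_ideal :: "'a::comm_ring_1 set \<Rightarrow> 'a set \<Rightarrow> bool" where
  "S_fp_ideal S I \<longleftrightarrow> (\<exists>n a. lmap n a ` freemod n = I \<and> (\<exists>s\<in>S. S_finite_wrt s (lker n a)))"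

definition fp_ideal :: "'a::comm_ring_1 set \<Rightarrow> bool" where
  "fp_ideal N \<longleftrightarrow> (\<exists>n a. lmap n a ` freemod n = N \<and> fg_submod (lker n a))"

definition c_S_fp_ideal :: "'a::comm_ring_1 set \<Rightarrow> 'a set \<Rightarrow> bool" where
  "c_S_fp_ideal S I \<longleftrightarrow> (\<exists>s\<in>S. \<exists>N. is_ideal N \<and> N \<subseteq> I \<and> fp_ideal N \<and> (\<forall>x\<in>I. s * x \<in> N))"

text \<open>u-S-finitely presented ideal w.r.t. s: exact 0 \<rightarrow> T1 \<rightarrow> F \<rightarrow> I \<rightarrow> T2 \<rightarrow> 0 with
  F finitely presented and s T1 = s T2 = 0.  F is taken in presented form F = R^m / K
  with K a finitely generated submodule of R^m; a map F \<rightarrow> I is a map g = lmap m a : R^m \<rightarrow> I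
  (a i \<in> I) with K \<subseteq> ker g.  Then T1 = ker g / K and T2 = I / im g.\<close>
definition u_S_fp_ideal_wrt :: "'a::comm_ring_1 \<Rightarrow> 'a set \<Rightarrow> bool" where
  "u_S_fp_ideal_wrt s I \<longleftrightarrow> (\<exists>m K a. submod m K \<and> fg_submod K \<and> (\<forall>i<m. a i \<in> I) \<and>
      K \<subseteq> lker m a \<and> (\<forall>x\<in>lker m a. smult_vec s x \<in> K) \<and>
      (\<forall>y\<in>I. s * y \<in> lmap m a ` freemod m))"

definition u_S_coherent :: "'a::comm_ring_1 set \<Rightarrow> bool" where
  "u_S_coherent S \<longleftrightarrow> (\<exists>s\<in>S. ring_S_finite_wrt s \<and>
      (\<forall>I::'a set. is_ideal I \<and> fg_ideal I \<longrightarrow> u_S_fp_ideal_wrt s I))"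

definition S_coherent :: "'a::comm_ring_1 set \<Rightarrow> bool" where
  "S_coherent S \<longleftrightarrow> (\<forall>I::'a set. is_ideal I \<and> fg_ideal I \<longrightarrow> S_fp_ideal S I)"

definition c_S_coherent :: "'a::comm_ring_1 set \<Rightarrow> bool" where
  "c_S_coherent S \<longleftrightarrow> (\<forall>I::'a set. is_ideal I \<and> fg_ideal I \<longrightarrow> c_S_fp_ideal S I)"

end

theory Submission
  imports Defs
begin

definition delta :: "nat \<Rightarrow> nat \<Rightarrow> 'a::comm_ring_1" where
  "delta i = (\<lambda>j. if j = i then 1 else 0)"

definition clos :: "(nat \<Rightarrow> 'a::comm_ring_1) set \<Rightarrow> bool" where
  "clos K \<longleftrightarrow> (\<lambda>i. 0) \<in> K \<and> (\<forall>x\<in>K. \<forall>y\<in>K. (\<lambda>i. x i + y i) \<in> K) \<and> (\<forall>r. \<forall>x\<in>K. smult_vec r x \<in> K)"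

lemma lmap_add: "lmap n a (\<lambda>i. x i + y i) = lmap n a x + lmap n a y"
  unfolding lmap_def by (simp add: sum.distrib distrib_right)

lemma lmap_smult: "lmap n a (smult_vec r x) = r * lmap n a x"
  unfolding lmap_def smult_vec_def by (simp add: sum_distrib_left mult.assoc)

lemma lmap_scale_a: "lmap n (\<lambda>i. r * a i) x = r * lmap n a x"
  unfolding lmap_def by (simp add: sum_distrib_left mult.left_commute)

lemma lmap_zero: "lmap n a (\<lambda>i. 0) = 0"
  unfolding lmap_def by simp

lemma lmap_cong: "(\<And>i. i < n \<Longrightarrow> x i = y i) \<Longrightarrow> lmap n a x = lmap n a y"
  unfolding lmap_def by (rule sum.cong) auto

lemma sum_delta_lemma:
  assumes "finite A"
  shows "(\<Sum>i\<in>A. f i * (c * delta i j)) = (if j \<in> A then f j * c else 0)"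
proof -
  have "(\<Sum>i\<in>A. f i * (c * delta i j)) = (\<Sum>i\<in>A. if i = j then f i * c else 0)"
    by (rule sum.cong) (auto simp: delta_def)
  also have "\<dots> = (if j \<in> A then f j * c else 0)"
    using assms by (simp add: sum.delta')
  finally show ?thesis .
qed

lemma lmap_delta: "i < n \<Longrightarrow> lmap n a (delta i) = a i"
proof -
  assume i: "i < n"
  have "lmap n a (delta i) = (\<Sum>j<n. a j * (1 * delta j i))"
    unfolding lmap_def by (rule sum.cong) (auto simp: delta_def)
  also have "\<dots> = a i" using i by (subst sum_delta_lemma) auto
  finally show ?thesis .
qed

lemma delta_freemod: "i < n \<Longrightarrow> smult_vec r (delta i) \<in> freemod n"
  unfolding freemod_def smult_vec_def delta_def by auto

lemma delta_freemod1: "i < n \<Longrightarrow> delta i \<in> freemod n"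
  unfolding freemod_def delta_def by auto

lemma freemod_clos: "clos (freemod n)"
  unfolding clos_def freemod_def smult_vec_def by auto

lemma lker_clos: "clos (lker n a)"
  unfolding clos_def lker_def using freemod_clos[of n]
  by (auto simp: lmap_add lmap_smult lmap_zero clos_def)

lemma ideal_sum:
  assumes "is_ideal I" "finite F" "\<forall>i\<in>F. f i \<in> I"
  shows "sum f F \<in> I"
  using assms(2,3)
proof (induct F rule: finite_induct)
  case empty then show ?case using assms(1) by (simp add: is_ideal_def)
next
  case (insert x F) then show ?case using assms(1) by (simp add: is_ideal_def)
qed

lemma ideal_mult: "is_ideal I \<Longrightarrow> x \<in> I \<Longrightarrow> r * x \<in> I"
  unfolding is_ideal_def by blast

lemma lmap_in_ideal:
  assumes "is_ideal I" "\<forall>i<n. a i \<in> I"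
  shows "lmap n a x \<in> I"
  unfolding lmap_def
proof (rule ideal_sum[OF assms(1)])
  show "\<forall>i\<in>{..<n}. x i * a i \<in> I" using assms ideal_mult by blast
qed simp

lemma image_is_ideal: "is_ideal (lmap n a ` freemod n)"
proof -
  have "(\<lambda>i. 0) \<in> freemod n" by (simp add: freemod_def)
  have 0: "0 \<in> lmap n a ` freemod n" by (rule image_eqI[where x="\<lambda>i. 0"]) (simp_all add: lmap_zero freemod_def)
  have 1: "\<forall>x\<in>lmap n a ` freemod n. \<forall>y\<in>lmap n a ` freemod n. x + y \<in> lmap n a ` freemod n"
  proof (intro ballI)
    fix x y assume "x \<in> lmap n a ` freemod n" "y \<in> lmap n a ` freemod n"
    then obtain u v where "u \<in> freemod n" "v \<in> freemod n" "x = lmap n a u" "y = lmap n a v" by auto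
    moreover have "(\<lambda>i. u i + v i) \<in> freemod n" using \<open>u \<in> freemod n\<close> \<open>v \<in> freemod n\<close>
      by (simp add: freemod_def)
    moreover have "x + y = lmap n a (\<lambda>i. u i + v i)" using \<open>x = _\<close> \<open>y = _\<close> by (simp add: lmap_add)
    ultimately show "x + y \<in> lmap n a ` freemod n" by (intro image_eqI)
  qed
  have 2: "\<forall>r. \<forall>x\<in>lmap n a ` freemod n. r * x \<in> lmap n a ` freemod n"
  proof (intro allI ballI)
    fix r x assume "x \<in> lmap n a ` freemod n"
    then obtain u where "u \<in> freemod n" "x = lmap n a u" by auto
    moreover have "smult_vec r u \<in> freemod n" using \<open>u \<in> freemod n\<close>
      by (simp add: freemod_def smult_vec_def)
    moreover have "r * x = lmap n a (smult_vec r u)" using \<open>x = _\<close> by (simp add: lmap_smult)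
    ultimately show "r * x \<in> lmap n a ` freemod n" by (intro image_eqI)
  qed
  show ?thesis using 0 1 2 by (simp add: is_ideal_def)
qed

lemma span_add: "x \<in> lin_span G \<Longrightarrow> y \<in> lin_span G \<Longrightarrow> (\<lambda>i. x i + y i) \<in> lin_span G"
proof -
  assume "x \<in> lin_span G" "y \<in> lin_span G"
  then obtain c1 c2 where "\<forall>i. x i = (\<Sum>g\<in>G. c1 g * g i)" "\<forall>i. y i = (\<Sum>g\<in>G. c2 g * g i)"
    by (auto simp: lin_span_def)
  then show ?thesis unfolding lin_span_def
    by (auto intro!: exI[of _ "\<lambda>g. c1 g + c2 g"] simp: sum.distrib distrib_right)
qed

lemma span_smult: "x \<in> lin_span G \<Longrightarrow> smult_vec r x \<in> lin_span G"
proof -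
  assume "x \<in> lin_span G"
  then obtain c where "\<forall>i. x i = (\<Sum>g\<in>G. c g * g i)" by (auto simp: lin_span_def)
  then show ?thesis unfolding lin_span_def smult_vec_def
    by (auto intro!: exI[of _ "\<lambda>g. r * c g"] simp: sum_distrib_left mult.assoc)
qed

lemma span_zero: "(\<lambda>i. 0) \<in> lin_span G"
  unfolding lin_span_def by (auto intro!: exI[of _ "\<lambda>g. 0"])

lemma span_base: "finite G \<Longrightarrow> g \<in> G \<Longrightarrow> g \<in> lin_span G"
proof -
  assume G: "finite G" "g \<in> G"
  have "\<forall>i. g i = (\<Sum>h\<in>G. (if h = g then 1 else 0) * h i)"
  proof
    fix i
    have "(\<Sum>h\<in>G. (if h = g then 1 else 0) * h i) = (\<Sum>h\<in>G. if h = g then g i else 0)"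
      by (rule sum.cong) auto
    also have "\<dots> = g i" using G by simp
    finally show "g i = (\<Sum>h\<in>G. (if h = g then 1 else 0) * h i)" by simp
  qed
  then show ?thesis unfolding lin_span_def by (intro CollectI exI)
qed

lemma span_sum:
  assumes "finite J" "\<forall>j\<in>J. f j \<in> lin_span G"
  shows "(\<lambda>i. \<Sum>j\<in>J. f j i) \<in> lin_span G"
  using assms
proof (induct J rule: finite_induct)
  case empty then show ?case using span_zero by simp
next
  case (insert x F)
  then show ?case using span_add[of "f x" G "\<lambda>i. \<Sum>j\<in>F. f j i"] by simp
qed

lemma span_mono:
  assumes "finite H" "G \<subseteq> H"
  shows "lin_span G \<subseteq> lin_span H"
proof
  fix x assume "x \<in> lin_span G"
  then obtain c where c: "\<forall>i. x i = (\<Sum>g\<in>G. c g * g i)" by (auto simp: lin_span_def)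
  have "\<forall>i. x i = (\<Sum>h\<in>H. (if h \<in> G then c h else 0) * h i)"
  proof
    fix i
    have "(\<Sum>h\<in>H. (if h \<in> G then c h else 0) * h i) = (\<Sum>h\<in>H. if h \<in> G then c h * h i else 0)"
      by (rule sum.cong) auto
    also have "\<dots> = (\<Sum>h\<in>H \<inter> G. c h * h i)"
      using sum.inter_restrict[OF assms(1), of "\<lambda>h. c h * h i" G] by simp
    also have "H \<inter> G = G" using assms(2) by blast
    finally show "x i = (\<Sum>h\<in>H. (if h \<in> G then c h else 0) * h i)" using c by simp
  qed
  then show "x \<in> lin_span H" unfolding lin_span_def by (intro CollectI exI)
qed

lemma span_subset:
  assumes "finite G" "G \<subseteq> K" "clos K"
  shows "lin_span G \<subseteq> K"
proof
  fix x assume "x \<in> lin_span G"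
  then obtain c where c: "\<forall>i. x i = (\<Sum>g\<in>G. c g * g i)" by (auto simp: lin_span_def)
  have "\<And>F. F \<subseteq> G \<Longrightarrow> (\<lambda>i. \<Sum>g\<in>F. c g * g i) \<in> K"
  proof -
    fix F assume F: "F \<subseteq> G"
    then have "finite F" using assms(1) finite_subset by blast
    then show "(\<lambda>i. \<Sum>g\<in>F. c g * g i) \<in> K" using F
    proof (induct F rule: finite_induct)
      case empty then show ?case using assms(3) by (simp add: clos_def)
    next
      case (insert y F)
      then have yK: "y \<in> K" and FK: "(\<lambda>i. \<Sum>g\<in>F. c g * g i) \<in> K" using assms(2) by auto
      then have sK: "smult_vec (c y) y \<in> K" using assms(3) by (simp add: clos_def)
      have add: "\<forall>x\<in>K. \<forall>y\<in>K. (\<lambda>i. x i + y i) \<in> K" using assms(3) clos_def by blast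
      have "(\<lambda>i. smult_vec (c y) y i + (\<Sum>g\<in>F. c g * g i)) \<in> K"
        using add[rule_format, OF sK FK] .
      moreover have "(\<lambda>i. \<Sum>g\<in>insert y F. c g * g i) = (\<lambda>i. smult_vec (c y) y i + (\<Sum>g\<in>F. c g * g i))"
        using insert(1,2) by (simp add: smult_vec_def)
      ultimately show ?case by simp
    qed
  qed
  then have "(\<lambda>i. \<Sum>g\<in>G. c g * g i) \<in> K" by blast
  moreover have "x = (\<lambda>i. \<Sum>g\<in>G. c g * g i)" using c by auto
  ultimately show "x \<in> K" by simp
qed

lemma sum_split: "(\<Sum>i<m+(k::nat). f i) = (\<Sum>i<m. f i) + (\<Sum>j<k. f (m+j))"
  by (induct k) (simp_all add: ac_simps)

lemma fg_presentation:
  assumes "fg_ideal I"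
  shows "\<exists>k b. lmap k b ` freemod k = I"
proof -
  obtain A where A: "finite A" "I = ideal_gen A" using assms by (auto simp: fg_ideal_def)
  obtain h where h: "bij_betw h {0..<card A} A" using ex_bij_betw_nat_finite[OF A(1)] by blast
  define k where "k = card A"
  have h': "bij_betw h {..<k} A" using h by (simp add: k_def atLeast0LessThan)
  have "lmap k h ` freemod k = ideal_gen A"
  proof
    show "lmap k h ` freemod k \<subseteq> ideal_gen A"
    proof
      fix y assume "y \<in> lmap k h ` freemod k"
      then obtain x where x: "y = lmap k h x" by auto
      define c where "c = (\<lambda>a. x (inv_into {..<k} h a))"
      have "(\<Sum>a\<in>A. c a * a) = (\<Sum>i\<in>{..<k}. c (h i) * h i)"
        using sum.reindex_bij_betw[OF h', of "\<lambda>a. c a * a"] by simp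
      also have "\<dots> = (\<Sum>i<k. x i * h i)"
        using h' by (intro sum.cong) (auto simp: c_def bij_betw_def inv_into_f_f)
      finally have "y = (\<Sum>a\<in>A. c a * a)" using x unfolding lmap_def by simp
      then show "y \<in> ideal_gen A" unfolding ideal_gen_def by blast
    qed
  next
    show "ideal_gen A \<subseteq> lmap k h ` freemod k"
    proof
      fix y assume "y \<in> ideal_gen A"
      then obtain c where c: "y = (\<Sum>a\<in>A. c a * a)" by (auto simp: ideal_gen_def)
      define x where "x = (\<lambda>i. if i < k then c (h i) else 0)"
      have "x \<in> freemod k" by (simp add: x_def freemod_def)
      have "(\<Sum>a\<in>A. c a * a) = (\<Sum>i\<in>{..<k}. c (h i) * h i)"
        using sum.reindex_bij_betw[OF h', of "\<lambda>a. c a * a"] by simp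
      also have "\<dots> = lmap k h x" unfolding lmap_def x_def by (intro sum.cong) auto
      finally show "y \<in> lmap k h ` freemod k" using c \<open>x \<in> freemod k\<close> by auto
    qed
  qed
  then show ?thesis using A by blast
qed


lemma prod_in_S:
  assumes "mult_subset S" "finite F" "F \<subseteq> S"
  shows "prod id F \<in> S"
  using assms(2,3)
proof (induct F rule: finite_induct)
  case empty then show ?case using assms(1) by (simp add: mult_subset_def)
next
  case (insert x F) then show ?case using assms(1) by (simp add: mult_subset_def)
qed

lemma exists_idem:
  fixes S :: "'a::comm_ring_1 set"
  assumes S: "mult_subset S" "finite S"
  shows "\<exists>e\<in>S. e * e = e \<and> (\<forall>t\<in>S. \<exists>u. e = t * u)"
proof -
  define s0 where "s0 = prod id S"
  have s0S: "s0 \<in> S" unfolding s0_def using prod_in_S[OF S(1) S(2)] by simp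
  have dv: "\<forall>t\<in>S. \<exists>u. s0 = t * u"
  proof
    fix t assume "t \<in> S"
    then have "s0 = t * prod id (S - {t})" unfolding s0_def using prod.remove[OF S(2), of t id] by simp
    then show "\<exists>u. s0 = t * u" by blast
  qed
  have pw: "\<And>n. s0 ^ n \<in> S"
  proof -
    fix n show "s0 ^ n \<in> S"
      by (induct n) (use S(1) s0S in \<open>auto simp: mult_subset_def\<close>)
  qed
  have "\<not> inj (\<lambda>n::nat. s0 ^ n)"
  proof
    assume inj: "inj (\<lambda>n::nat. s0 ^ n)"
    have "range (\<lambda>n::nat. s0 ^ n) \<subseteq> S" using pw by auto
    then have "finite (range (\<lambda>n::nat. s0 ^ n))" using S(2) finite_subset by blast
    then have "finite (UNIV :: nat set)" using finite_imageD inj by blast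
    then show False by simp
  qed
  then obtain p q :: nat where pq0: "p \<noteq> q" "s0 ^ p = s0 ^ q" unfolding inj_def by blast
  then obtain p q :: nat where pq: "p < q" "s0 ^ p = s0 ^ q"
    by (metis linorder_neq_iff)
  define d where "d = q - p"
  have d: "d > 0" "s0 ^ p = s0 ^ (p + d)" using pq by (auto simp: d_def)
  have per: "\<And>r j. s0 ^ (p + j + d * r) = s0 ^ (p + j)"
  proof -
    fix r j show "s0 ^ (p + j + d * r) = s0 ^ (p + j)"
    proof (induct r)
      case 0 then show ?case by simp
    next
      case (Suc r)
      have "s0 ^ (p + j + d * Suc r) = s0 ^ (p + d) * s0 ^ (j + d * r)"
        by (simp add: power_add[symmetric] algebra_simps)
      also have "\<dots> = s0 ^ p * s0 ^ (j + d * r)" using d by simp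
      also have "\<dots> = s0 ^ (p + j + d * r)" by (simp add: power_add[symmetric] algebra_simps)
      finally show ?case using Suc by simp
    qed
  qed
  define N where "N = (p + 1) * d"
  have "(p + 1) * 1 \<le> (p + 1) * d" using d by (intro mult_le_mono2) simp
  then have N1: "N \<ge> p + 1" by (simp add: N_def)
  define e where "e = s0 ^ N"
  have "e * e = s0 ^ (p + (N - p) + d * (p + 1))"
    unfolding e_def using N1 by (simp add: power_add[symmetric] N_def algebra_simps)
  also have "\<dots> = s0 ^ (p + (N - p))" by (rule per)
  also have "\<dots> = e" unfolding e_def using N1 by simp
  finally have ee: "e * e = e" .
  have eS: "e \<in> S" using pw by (simp add: e_def)
  have "\<forall>t\<in>S. \<exists>u. e = t * u"
  proof
    fix t assume "t \<in> S"
    then obtain u where "s0 = t * u" using dv by blast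
    moreover have "e = s0 * s0 ^ (N - 1)" unfolding e_def using N1
      by (metis Suc_diff_1 add_gr_0 less_le_trans power_Suc zero_less_one)
    ultimately have "e = t * (u * s0 ^ (N - 1))" by (simp add: mult.assoc)
    then show "\<exists>u. e = t * u" by blast
  qed
  then show ?thesis using ee eS by blast
qed

lemma e_compl: "(e::'a::comm_ring_1) * e = e \<Longrightarrow> e * (1 - e) = 0 \<and> (1 - e) * e = 0"
  by (simp add: algebra_simps)

definition Hprop :: "'a::comm_ring_1 \<Rightarrow> 'a set \<Rightarrow> bool" where
  "Hprop e I \<longleftrightarrow> (\<exists>m a G. (\<forall>i<m. a i \<in> I) \<and> (\<forall>y\<in>I. e * y \<in> lmap m a ` freemod m) \<and>
     finite G \<and> G \<subseteq> lker m a \<and> (\<forall>x\<in>lker m a. smult_vec e x \<in> lin_span G))"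

lemma lemM:
  fixes e :: "'a::comm_ring_1"
  assumes e: "e * e = e" and I: "is_ideal I" and a: "\<forall>i<m. a i \<in> I"
    and ey: "\<forall>y\<in>I. e * y \<in> lmap m a ` freemod m"
    and G: "finite G" "G \<subseteq> lker m a" and ex: "\<forall>x\<in>lker m a. smult_vec e x \<in> lin_span G"
  shows "\<exists>N. is_ideal N \<and> N \<subseteq> I \<and> fp_ideal N \<and> (\<forall>x\<in>I. e * x \<in> N)"
proof -
  define a' where "a' = (\<lambda>i. e * a i)"
  define N where "N = lmap m a' ` freemod m"
  have e1: "e * (1 - e) = 0" "(1 - e) * e = 0" using e_compl[OF e] by auto
  have N1: "is_ideal N" unfolding N_def by (rule image_is_ideal)
  have a'I: "\<forall>i<m. a' i \<in> I" using a I ideal_mult unfolding a'_def by blast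
  have N2: "N \<subseteq> I" unfolding N_def using lmap_in_ideal[OF I a'I] by blast
  have N3: "\<forall>x\<in>I. e * x \<in> N"
  proof
    fix x assume "x \<in> I"
    then obtain z where z: "z \<in> freemod m" "e * x = lmap m a z" using ey by blast
    have "e * x = e * (e * x)" using e by (simp add: mult.assoc[symmetric])
    also have "\<dots> = lmap m a' z" unfolding a'_def using z by (simp add: lmap_scale_a)
    finally show "e * x \<in> N" unfolding N_def using z by blast
  qed
  define G' where "G' = (\<lambda>i. smult_vec (1 - e) (delta i)) ` {..<m} \<union> G"
  have fG': "finite G'" using G by (simp add: G'_def)
  have lkr: "lmap m a' x = e * lmap m a x" for x unfolding a'_def by (rule lmap_scale_a)
  have G'k: "G' \<subseteq> lker m a'"
  proof
    fix g assume "g \<in> G'"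
    then consider (d) i where "i < m" "g = smult_vec (1 - e) (delta i)" | (g) "g \<in> G"
      unfolding G'_def by blast
    then show "g \<in> lker m a'"
    proof cases
      case d
      have "lmap m a' g = (1 - e) * (e * a i)" using d by (simp add: lmap_smult lmap_delta a'_def)
      also have "\<dots> = 0" using e1 by (simp add: mult.assoc[symmetric])
      finally show ?thesis using d delta_freemod by (simp add: lker_def)
    next
      case g
      then have "g \<in> lker m a" using G by blast
      then show ?thesis by (simp add: lker_def lkr)
    qed
  qed
  have "lker m a' = lin_span G'"
  proof
    show "lin_span G' \<subseteq> lker m a'" by (rule span_subset[OF fG' G'k lker_clos])
  next
    show "lker m a' \<subseteq> lin_span G'"
    proof
      fix x assume x: "x \<in> lker m a'"
      then have xf: "x \<in> freemod m" and x0: "e * lmap m a x = 0" by (auto simp: lker_def lkr)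
      have "lmap m a (smult_vec e x) = 0" using x0 by (simp add: lmap_smult)
      moreover have "smult_vec e x \<in> freemod m" using xf by (simp add: freemod_def smult_vec_def)
      ultimately have "smult_vec e x \<in> lker m a" by (simp add: lker_def)
      then have "smult_vec e (smult_vec e x) \<in> lin_span G" using ex by blast
      moreover have "smult_vec e (smult_vec e x) = smult_vec e x"
        by (simp add: smult_vec_def mult.assoc[symmetric] e)
      ultimately have A: "smult_vec e x \<in> lin_span G'"
        using span_mono[OF fG', of G] by (auto simp: G'_def)
      have B: "(\<lambda>j. \<Sum>i\<in>{..<m}. smult_vec (x i) (smult_vec (1 - e) (delta i)) j) \<in> lin_span G'"
      proof (rule span_sum)
        show "\<forall>i\<in>{..<m}. smult_vec (x i) (smult_vec (1 - e) (delta i)) \<in> lin_span G'"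
          using span_base[OF fG'] span_smult by (auto simp: G'_def)
      qed simp
      have "x = (\<lambda>j. smult_vec e x j + (\<Sum>i\<in>{..<m}. smult_vec (x i) (smult_vec (1 - e) (delta i)) j))"
      proof
        fix j
        have "(\<Sum>i\<in>{..<m}. smult_vec (x i) (smult_vec (1 - e) (delta i)) j)
            = (\<Sum>i\<in>{..<m}. x i * ((1 - e) * delta i j))" by (simp add: smult_vec_def)
        also have "\<dots> = (if j \<in> {..<m} then x j * (1 - e) else 0)" by (rule sum_delta_lemma) simp
        finally have "(\<Sum>i\<in>{..<m}. smult_vec (x i) (smult_vec (1 - e) (delta i)) j)
            = (if j < m then x j * (1 - e) else 0)" by simp
        moreover have "j \<ge> m \<Longrightarrow> x j = 0" using xf by (simp add: freemod_def)
        ultimately show "x j = smult_vec e x j + (\<Sum>i\<in>{..<m}. smult_vec (x i) (smult_vec (1 - e) (delta i)) j)"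
          by (auto simp: smult_vec_def algebra_simps)
      qed
      then show "x \<in> lin_span G'" using span_add[OF A B] by simp
    qed
  qed
  then have "fg_submod (lker m a')" unfolding fg_submod_def using fG' G'k by blast
  then have "fp_ideal N" unfolding fp_ideal_def N_def by blast
  then show ?thesis using N1 N2 N3 by blast
qed


lemma lemL:
  fixes e :: "'a::comm_ring_1"
  assumes e: "e * e = e" and I: "is_ideal I" and b: "lmap k b ` freemod k = I"
    and a: "\<forall>i<m. a i \<in> I"
    and ey: "\<forall>y\<in>I. e * y \<in> lmap m a ` freemod m"
    and G: "finite G" "G \<subseteq> lker m a" and ex: "\<forall>x\<in>lker m a. smult_vec e x \<in> lin_span G"
  shows "\<exists>n a'. lmap n a' ` freemod n = I \<and> S_finite_wrt e (lker n a')"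
proof -
  have e1: "e * (1 - e) = 0" "(1 - e) * e = 0" using e_compl[OF e] by auto
  define a' where "a' = (\<lambda>i. if i < m then e * a i else (1 - e) * b (i - m))"
  have lm: "lmap (m + k) a' x = e * lmap m a x + (1 - e) * lmap k b (\<lambda>j. x (m + j))" for x
  proof -
    have "lmap (m + k) a' x = (\<Sum>i<m. x i * a' i) + (\<Sum>j<k. x (m + j) * a' (m + j))"
      unfolding lmap_def by (rule sum_split)
    also have "(\<Sum>i<m. x i * a' i) = (\<Sum>i<m. e * (x i * a i))"
      by (rule sum.cong) (auto simp: a'_def mult.left_commute)
    also have "(\<Sum>j<k. x (m + j) * a' (m + j)) = (\<Sum>j<k. (1 - e) * (x (m + j) * b j))"
      by (rule sum.cong) (auto simp: a'_def mult.left_commute)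
    finally show ?thesis unfolding lmap_def by (simp add: sum_distrib_left)
  qed
  have img: "lmap (m + k) a' ` freemod (m + k) = I"
  proof
    show "lmap (m + k) a' ` freemod (m + k) \<subseteq> I"
    proof
      fix y assume "y \<in> lmap (m + k) a' ` freemod (m + k)"
      then obtain x where x: "x \<in> freemod (m + k)" "y = lmap (m + k) a' x" by blast
      have "(\<lambda>j. x (m + j)) \<in> freemod k" using x by (simp add: freemod_def)
      then have "lmap k b (\<lambda>j. x (m + j)) \<in> I" using b by blast
      moreover have "lmap m a x \<in> I" using lmap_in_ideal[OF I a] .
      ultimately show "y \<in> I" using x lm I unfolding is_ideal_def by simp
    qed
  next
    show "I \<subseteq> lmap (m + k) a' ` freemod (m + k)"
    proof
      fix y assume y: "y \<in> I"
      obtain x1 where x1: "x1 \<in> freemod m" "e * y = lmap m a x1" using ey y by blast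
      obtain x2 where x2: "x2 \<in> freemod k" "y = lmap k b x2" using b y by blast
      define x where "x = (\<lambda>i. if i < m then x1 i else x2 (i - m))"
      have xf: "x \<in> freemod (m + k)" using x2 by (auto simp: freemod_def x_def)
      have "lmap m a x = lmap m a x1" by (rule lmap_cong) (simp add: x_def)
      moreover have "(\<lambda>j. x (m + j)) = x2" by (auto simp: x_def)
      ultimately have "lmap (m + k) a' x = e * (e * y) + (1 - e) * y" using lm x1 x2 by simp
      also have "\<dots> = y" using e by (simp add: mult.assoc[symmetric] algebra_simps)
      finally show "y \<in> lmap (m + k) a' ` freemod (m + k)" using xf by (metis image_eqI)
    qed
  qed
  define G'' where "G'' = G \<union> (\<lambda>i. smult_vec e (delta i)) ` {m..<m + k}"
  have fG: "finite G''" using G by (simp add: G''_def)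
  have Gk: "G'' \<subseteq> lker (m + k) a'"
  proof
    fix g assume "g \<in> G''"
    then consider (g) "g \<in> G" | (d) i where "m \<le> i" "i < m + k" "g = smult_vec e (delta i)"
      unfolding G''_def by auto
    then show "g \<in> lker (m + k) a'"
    proof cases
      case g
      then have gl: "g \<in> lker m a" using G by blast
      then have "g \<in> freemod (m + k)" by (auto simp: lker_def freemod_def)
      moreover have "(\<lambda>j. g (m + j)) = (\<lambda>j. 0)" using gl by (auto simp: lker_def freemod_def)
      ultimately show ?thesis using gl lm by (simp add: lker_def lmap_zero)
    next
      case d
      have "lmap (m + k) a' g = e * ((1 - e) * b (i - m))"
        using d by (simp add: lmap_smult lmap_delta a'_def)
      also have "\<dots> = 0" using e1 by (simp add: mult.assoc[symmetric])
      finally show ?thesis using d delta_freemod by (simp add: lker_def)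
    qed
  qed
  have "\<forall>x\<in>lker (m + k) a'. smult_vec e x \<in> lin_span G''"
  proof
    fix x assume x: "x \<in> lker (m + k) a'"
    then have xf: "x \<in> freemod (m + k)" and x0: "e * lmap m a x + (1 - e) * lmap k b (\<lambda>j. x (m + j)) = 0"
      by (auto simp: lker_def lm)
    have "e * (e * lmap m a x + (1 - e) * lmap k b (\<lambda>j. x (m + j))) = e * lmap m a x"
      using e e1 by (simp add: distrib_left mult.assoc[symmetric])
    then have ea0: "e * lmap m a x = 0" using x0 by simp
    define xl where "xl = (\<lambda>i. if i < m then e * x i else 0)"
    have "lmap m a xl = lmap m a (smult_vec e x)" by (rule lmap_cong) (simp add: xl_def smult_vec_def)
    then have "lmap m a xl = 0" using ea0 by (simp add: lmap_smult)
    moreover have "xl \<in> freemod m" by (simp add: xl_def freemod_def)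
    ultimately have "xl \<in> lker m a" by (simp add: lker_def)
    then have "smult_vec e xl \<in> lin_span G" using ex by blast
    moreover have "smult_vec e xl = xl"
      by (auto simp: xl_def smult_vec_def mult.assoc[symmetric] e)
    ultimately have A: "xl \<in> lin_span G''" using span_mono[OF fG, of G] by (auto simp: G''_def)
    have B: "(\<lambda>j. \<Sum>i\<in>{m..<m + k}. smult_vec (x i) (smult_vec e (delta i)) j) \<in> lin_span G''"
    proof (rule span_sum)
      show "\<forall>i\<in>{m..<m + k}. smult_vec (x i) (smult_vec e (delta i)) \<in> lin_span G''"
        using span_base[OF fG] span_smult by (auto simp: G''_def)
    qed simp
    have "smult_vec e x = (\<lambda>j. xl j + (\<Sum>i\<in>{m..<m + k}. smult_vec (x i) (smult_vec e (delta i)) j))"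
    proof
      fix j
      have "(\<Sum>i\<in>{m..<m + k}. smult_vec (x i) (smult_vec e (delta i)) j)
          = (\<Sum>i\<in>{m..<m + k}. x i * (e * delta i j))" by (simp add: smult_vec_def)
      also have "\<dots> = (if j \<in> {m..<m + k} then x j * e else 0)" by (rule sum_delta_lemma) simp
      finally have s: "(\<Sum>i\<in>{m..<m + k}. smult_vec (x i) (smult_vec e (delta i)) j)
          = (if j \<in> {m..<m + k} then x j * e else 0)" .
      have "j \<ge> m + k \<Longrightarrow> x j = 0" using xf by (simp add: freemod_def)
      then show "smult_vec e x j = xl j + (\<Sum>i\<in>{m..<m + k}. smult_vec (x i) (smult_vec e (delta i)) j)"
        unfolding s by (auto simp: smult_vec_def xl_def mult.commute)
    qed
    then show "smult_vec e x \<in> lin_span G''" using span_add[OF A B] by simp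
  qed
  then have "S_finite_wrt e (lker (m + k) a')" unfolding S_finite_wrt_def using fG Gk by blast
  then show ?thesis using img by blast
qed


lemma smult_comp: "smult_vec (t * u) x = smult_vec u (smult_vec t x)"
  by (simp add: smult_vec_def mult_ac)

theorem proposition3p13:
  fixes S :: "'a::comm_ring_1 set"
  assumes "mult_subset S" and "finite S"
  shows "(u_S_coherent S \<longleftrightarrow> S_coherent S) \<and> (S_coherent S \<longleftrightarrow> c_S_coherent S)"
proof -
  obtain e where eS: "e \<in> S" and ee: "e * e = e" and dv: "\<forall>t\<in>S. \<exists>u. e = t * u"
    using exists_idem[OF assms] by blast
  let ?H = "\<forall>I. is_ideal I \<and> fg_ideal I \<longrightarrow> Hprop e I"
  have H1: ?H if u: "u_S_coherent S"
  proof (intro allI impI)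
    fix I :: "'a set" assume I: "is_ideal I \<and> fg_ideal I"
    from u obtain s where s: "s \<in> S" "\<forall>I. is_ideal I \<and> fg_ideal I \<longrightarrow> u_S_fp_ideal_wrt s I"
      unfolding u_S_coherent_def by blast
    from s(2) I have "u_S_fp_ideal_wrt s I" by blast
    then obtain m K a where K: "submod m K" "fg_submod K" "\<forall>i<m. a i \<in> I" "K \<subseteq> lker m a"
      "\<forall>x\<in>lker m a. smult_vec s x \<in> K" "\<forall>y\<in>I. s * y \<in> lmap m a ` freemod m"
      unfolding u_S_fp_ideal_wrt_def by blast
    obtain GK where GK: "finite GK" "GK \<subseteq> K" "K = lin_span GK" using K(2) unfolding fg_submod_def by blast
    obtain u where eu: "e = s * u" using dv s(1) by blast
    have A: "\<forall>y\<in>I. e * y \<in> lmap m a ` freemod m"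
    proof
      fix y assume "y \<in> I"
      then obtain z where z: "z \<in> freemod m" "s * y = lmap m a z" using K(6) by blast
      have "e * y = u * (s * y)" by (simp add: eu mult_ac)
      also have "\<dots> = u * lmap m a z" using z by simp
      also have "\<dots> = lmap m a (smult_vec u z)" by (simp add: lmap_smult)
      finally have "e * y = lmap m a (smult_vec u z)" .
      moreover have "smult_vec u z \<in> freemod m" using z by (simp add: freemod_def smult_vec_def)
      ultimately show "e * y \<in> lmap m a ` freemod m" by blast
    qed
    have B: "\<forall>x\<in>lker m a. smult_vec e x \<in> lin_span GK"
    proof
      fix x assume "x \<in> lker m a"
      then have "smult_vec s x \<in> lin_span GK" using K(5) GK(3) by blast
      then have "smult_vec u (smult_vec s x) \<in> lin_span GK" by (rule span_smult)
      then show "smult_vec e x \<in> lin_span GK" by (simp add: eu smult_comp)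
    qed
    have "GK \<subseteq> lker m a" using GK(2) K(4) by blast
    then show "Hprop e I" unfolding Hprop_def using K(3) A B GK(1) by blast
  qed
  have H2: ?H if sc: "S_coherent S"
  proof (intro allI impI)
    fix I :: "'a set" assume I: "is_ideal I \<and> fg_ideal I"
    then obtain n a t where na: "lmap n a ` freemod n = I" "t \<in> S" "S_finite_wrt t (lker n a)"
      using sc unfolding S_coherent_def S_fp_ideal_def by blast
    then obtain G where G: "finite G" "G \<subseteq> lker n a" "\<forall>x\<in>lker n a. smult_vec t x \<in> lin_span G"
      unfolding S_finite_wrt_def by blast
    obtain u where eu: "e = t * u" using dv na(2) by blast
    have A0: "\<forall>i<n. a i \<in> lmap n a ` freemod n"
    proof (intro allI impI)
      fix i assume i: "i < n"
      show "a i \<in> lmap n a ` freemod n"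
        by (rule image_eqI[where x="delta i"]) (simp_all add: lmap_delta[OF i] delta_freemod1[OF i])
    qed
    have A: "\<forall>i<n. a i \<in> I" using A0 na(1) by simp
    have B: "\<forall>y\<in>I. e * y \<in> lmap n a ` freemod n"
    proof
      fix y assume "y \<in> I"
      then have "e * y \<in> I" using I ideal_mult by blast
      then show "e * y \<in> lmap n a ` freemod n" using na(1) by simp
    qed
    have C: "\<forall>x\<in>lker n a. smult_vec e x \<in> lin_span G"
      using G(3) span_smult by (simp add: eu smult_comp) blast
    show "Hprop e I" unfolding Hprop_def using A B C G(1,2) by blast
  qed
  have H3: ?H if cc: "c_S_coherent S"
  proof (intro allI impI)
    fix I :: "'a set" assume I: "is_ideal I \<and> fg_ideal I"
    then obtain s N where sN: "s \<in> S" "is_ideal N" "N \<subseteq> I" "fp_ideal N" "\<forall>x\<in>I. s * x \<in> N"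
      using cc unfolding c_S_coherent_def c_S_fp_ideal_def by blast
    then obtain n a where na: "lmap n a ` freemod n = N" "fg_submod (lker n a)"
      unfolding fp_ideal_def by blast
    then obtain G where G: "finite G" "G \<subseteq> lker n a" "lker n a = lin_span G"
      unfolding fg_submod_def by blast
    obtain u where eu: "e = s * u" using dv sN(1) by blast
    have A0: "\<forall>i<n. a i \<in> lmap n a ` freemod n"
    proof (intro allI impI)
      fix i assume i: "i < n"
      show "a i \<in> lmap n a ` freemod n"
        by (rule image_eqI[where x="delta i"]) (simp_all add: lmap_delta[OF i] delta_freemod1[OF i])
    qed
    have A: "\<forall>i<n. a i \<in> I" using A0 na(1) sN(3) by auto
    have B: "\<forall>y\<in>I. e * y \<in> lmap n a ` freemod n"
    proof
      fix y assume "y \<in> I"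
      then have "u * (s * y) \<in> N" using sN(2,5) ideal_mult by blast
      then show "e * y \<in> lmap n a ` freemod n" using na(1) by (simp add: eu mult_ac)
    qed
    have C: "\<forall>x\<in>lker n a. smult_vec e x \<in> lin_span G"
      using lker_clos[of n a] G(3) unfolding clos_def by blast
    show "Hprop e I" unfolding Hprop_def using A B C G(1,2) by blast
  qed
  have C1: "u_S_coherent S" if HH: ?H
  proof -
    have rf: "ring_S_finite_wrt e" unfolding ring_S_finite_wrt_def ideal_gen_def
      by (intro exI[of _ "{1}"]) auto
    have "u_S_fp_ideal_wrt e I" if I: "is_ideal I \<and> fg_ideal I" for I
    proof -
      obtain m a G where G: "\<forall>i<m. a i \<in> I" "\<forall>y\<in>I. e * y \<in> lmap m a ` freemod m"
        "finite G" "G \<subseteq> lker m a" "\<forall>x\<in>lker m a. smult_vec e x \<in> lin_span G"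
        using HH I unfolding Hprop_def by blast
      have sl: "lin_span G \<subseteq> lker m a" by (rule span_subset[OF G(3) G(4) lker_clos])
      have "lker m a \<subseteq> freemod m" by (auto simp: lker_def)
      then have "submod m (lin_span G)" unfolding submod_def
        using sl by (auto intro: span_zero span_add span_smult)
      moreover have "fg_submod (lin_span G)" unfolding fg_submod_def
        using G(3) span_base[OF G(3)] by blast
      ultimately show ?thesis unfolding u_S_fp_ideal_wrt_def using G sl by blast
    qed
    then show ?thesis unfolding u_S_coherent_def using eS rf by blast
  qed
  have C2: "S_coherent S" if HH: ?H
    unfolding S_coherent_def
  proof (intro allI impI)
    fix I :: "'a set" assume I: "is_ideal I \<and> fg_ideal I"
    obtain k b where b: "lmap k b ` freemod k = I" using fg_presentation I by blast
    obtain m a G where G: "\<forall>i<m. a i \<in> I" "\<forall>y\<in>I. e * y \<in> lmap m a ` freemod m"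
      "finite G" "G \<subseteq> lker m a" "\<forall>x\<in>lker m a. smult_vec e x \<in> lin_span G"
      using HH I unfolding Hprop_def by blast
    obtain n a' where "lmap n a' ` freemod n = I" "S_finite_wrt e (lker n a')"
      using lemL[OF ee _ b G] I by blast
    then show "S_fp_ideal S I" unfolding S_fp_ideal_def using eS by blast
  qed
  have C3: "c_S_coherent S" if HH: ?H
    unfolding c_S_coherent_def
  proof (intro allI impI)
    fix I :: "'a set" assume I: "is_ideal I \<and> fg_ideal I"
    obtain m a G where G: "\<forall>i<m. a i \<in> I" "\<forall>y\<in>I. e * y \<in> lmap m a ` freemod m"
      "finite G" "G \<subseteq> lker m a" "\<forall>x\<in>lker m a. smult_vec e x \<in> lin_span G"
      using HH I unfolding Hprop_def by blast
    obtain N where "is_ideal N \<and> N \<subseteq> I \<and> fp_ideal N \<and> (\<forall>x\<in>I. e * x \<in> N)"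
      using lemM[OF ee _ G] I by blast
    then show "c_S_fp_ideal S I" unfolding c_S_fp_ideal_def using eS by blast
  qed
  show ?thesis
  proof (intro conjI iffI)
    assume "u_S_coherent S" then show "S_coherent S" by (intro C2 H1)
  next
    assume "S_coherent S" then show "u_S_coherent S" by (intro C1 H2)
  next
    assume "S_coherent S" then show "c_S_coherent S" by (intro C3 H2)
  next
    assume "c_S_coherent S" then show "S_coherent S" by (intro C2 H3)
  qed
qed

end
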